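(* Let $\oplus$ be a combinator whose domain is contained in $V(W)$. Then $\oplus$ is a TeamQueue combinator if and only if $\oplus$ is basic and satisfies, for every pair $\langle\preceq_1,\preceq_2\rangle$ in its domain and all $x,y,z \in W$: ($\oplus$SPU+) if $x \prec_1 y$ and $z \prec_2 y$ then $x \prec_{1\oplus 2} y$ or $z \prec_{1\oplus 2} y$; ($\oplus$WPU+) if $x \preceq_1 y$ and $z \preceq_2 y$ then $x \preceq_{1\oplus 2} y$ or $z \preceq_{1\oplus 2} y$.
   Context: $W$ is a finite nonempty set (of possible worlds). A tpo is a total preorder on $W$; $\prec$ is its strict part. For $S \subseteq W$, $\min(\preceq, S) = \{x \in S : x \preceq y \text{ for all } y \in S\}$. Two tpos $\preceq_1, \preceq_2$ are $S$-variants ($S \subseteq W$) if $x \preceq_1 y \iff x \preceq_2 y$ for all $(x,y) \in (S\times S) \cup (S^c \times S^c)$; $V(W)$ is the set of pairs $\langle\preceq_1,\preceq_2\rangle$ of tpos that are $S$-variants for some $S \subseteq W$. A combinator $\oplus$ maps pairs of tpos in its domain to a tpo $\preceq_{1\oplus 2}$. It is basic if $\min(\preceq_{1\oplus 2}, W) = \min(\preceq_1, W) \cup \min(\preceq_2, W)$ for every pair in its domain. $\oplus$ is a TeamQueue combinator if for each pair $\langle\preceq_1,\preceq_2\rangle$ in its domain there is a sequence $\langle a(i)\rangle_{i \in \mathbb{N}}$ with $\emptyset \neq a(i) \subseteq \{1,2\}$ and $a(1) = \{1,2\}$, such that $\preceq_{1\oplus 2}$ is the tpo with ordered partition into ranks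 (most plausible first) $\langle T_1, \ldots, T_m\rangle$, where $T_i = \bigcup_{j \in a(i)} \min(\preceq_j, \bigcap_{k<i} T_k^c)$ and $m$ is minimal with $\bigcup_{i \le m} T_i = W$. *)

theory Defs
  imports Main
begin

text \<open>Plausibility orders are relations on a finite carrier W; (x,y) in R means x is at
least as plausible as y.\<close>

definition tpo :: "'a set \<Rightarrow> 'a rel \<Rightarrow> bool" where
  "tpo W R \<longleftrightarrow> R \<subseteq> W \<times> W \<and> (\<forall>x\<in>W. (x,x) \<in> R)
     \<and> (\<forall>x y z. (x,y) \<in> R \<longrightarrow> (y,z) \<in> R \<longrightarrow> (x,z) \<in> R)
     \<and> (\<forall>x\<in>W. \<forall>y\<in>W. (x,y) \<in> R \<or> (y,x) \<in> R)"

definition strict :: "'a rel \<Rightarrow> 'a \<Rightarrow> 'a \<Rightarrow> bool" where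
  "strict R x y \<longleftrightarrow> (x,y) \<in> R \<and> (y,x) \<notin> R"

definition minset :: "'a rel \<Rightarrow> 'a set \<Rightarrow> 'a set" where
  "minset R S = {x \<in> S. \<forall>y\<in>S. (x,y) \<in> R}"

definition variants :: "'a set \<Rightarrow> 'a set \<Rightarrow> 'a rel \<Rightarrow> 'a rel \<Rightarrow> bool" where
  "variants W S R1 R2 \<longleftrightarrow>
     (\<forall>x y. (x,y) \<in> (S \<times> S) \<union> ((W - S) \<times> (W - S)) \<longrightarrow> ((x,y) \<in> R1 \<longleftrightarrow> (x,y) \<in> R2))"

definition Vpairs :: "'a set \<Rightarrow> ('a rel \<times> 'a rel) set" where
  "Vpairs W = {(R1,R2). tpo W R1 \<and> tpo W R2 \<and> (\<exists>S\<subseteq>W. variants W S R1 R2)}"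

definition combinator :: "'a set \<Rightarrow> ('a rel \<times> 'a rel) set \<Rightarrow> ('a rel \<Rightarrow> 'a rel \<Rightarrow> 'a rel) \<Rightarrow> bool" where
  "combinator W D f \<longleftrightarrow> (\<forall>(R1,R2)\<in>D. tpo W (f R1 R2))"

definition basic :: "'a set \<Rightarrow> ('a rel \<times> 'a rel) set \<Rightarrow> ('a rel \<Rightarrow> 'a rel \<Rightarrow> 'a rel) \<Rightarrow> bool" where
  "basic W D f \<longleftrightarrow> (\<forall>(R1,R2)\<in>D. minset (f R1 R2) W = minset R1 W \<union> minset R2 W)"

definition sel :: "'a rel \<Rightarrow> 'a rel \<Rightarrow> nat \<Rightarrow> 'a rel" where
  "sel R1 R2 j = (if j = 1 then R1 else R2)"

primrec tq_rem :: "'a set \<Rightarrow> 'a rel \<Rightarrow> 'a rel \<Rightarrow> (nat \<Rightarrow> nat set) \<Rightarrow> nat \<Rightarrow> 'a set" where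
  "tq_rem W R1 R2 a 0 = W"
| "tq_rem W R1 R2 a (Suc n) = tq_rem W R1 R2 a n -
     (\<Union>j\<in>a (Suc n). minset (sel R1 R2 j) (tq_rem W R1 R2 a n))"

definition tq_rank :: "'a set \<Rightarrow> 'a rel \<Rightarrow> 'a rel \<Rightarrow> (nat \<Rightarrow> nat set) \<Rightarrow> nat \<Rightarrow> 'a set" where
  "tq_rank W R1 R2 a i = (\<Union>j\<in>a i. minset (sel R1 R2 j) (tq_rem W R1 R2 a (i - 1)))"

definition tq_order :: "'a set \<Rightarrow> 'a rel \<Rightarrow> 'a rel \<Rightarrow> (nat \<Rightarrow> nat set) \<Rightarrow> nat \<Rightarrow> 'a rel" where
  "tq_order W R1 R2 a m = {(x,y). \<exists>i j. 1 \<le> i \<and> i \<le> j \<and> j \<le> m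
       \<and> x \<in> tq_rank W R1 R2 a i \<and> y \<in> tq_rank W R1 R2 a j}"

definition covers_at :: "'a set \<Rightarrow> 'a rel \<Rightarrow> 'a rel \<Rightarrow> (nat \<Rightarrow> nat set) \<Rightarrow> nat \<Rightarrow> bool" where
  "covers_at W R1 R2 a m \<longleftrightarrow> (\<Union>i\<in>{1..m}. tq_rank W R1 R2 a i) = W"

definition teamqueue :: "'a set \<Rightarrow> ('a rel \<times> 'a rel) set \<Rightarrow> ('a rel \<Rightarrow> 'a rel \<Rightarrow> 'a rel) \<Rightarrow> bool" where
  "teamqueue W D f \<longleftrightarrow> (\<forall>(R1,R2)\<in>D. \<exists>a :: nat \<Rightarrow> nat set.
      (\<forall>i\<ge>1. a i \<noteq> {} \<and> a i \<subseteq> {1,2}) \<and> a 1 = {1,2} \<and>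
      (\<exists>m. covers_at W R1 R2 a m \<and> (\<forall>m'<m. \<not> covers_at W R1 R2 a m')
           \<and> f R1 R2 = tq_order W R1 R2 a m))"

definition SPU_plus :: "'a set \<Rightarrow> ('a rel \<times> 'a rel) set \<Rightarrow> ('a rel \<Rightarrow> 'a rel \<Rightarrow> 'a rel) \<Rightarrow> bool" where
  "SPU_plus W D f \<longleftrightarrow> (\<forall>(R1,R2)\<in>D. \<forall>x\<in>W. \<forall>y\<in>W. \<forall>z\<in>W.
      strict R1 x y \<and> strict R2 z y \<longrightarrow> strict (f R1 R2) x y \<or> strict (f R1 R2) z y)"

definition WPU_plus :: "'a set \<Rightarrow> ('a rel \<times> 'a rel) set \<Rightarrow> ('a rel \<Rightarrow> 'a rel \<Rightarrow> 'a rel) \<Rightarrow> bool" where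
  "WPU_plus W D f \<longleftrightarrow> (\<forall>(R1,R2)\<in>D. \<forall>x\<in>W. \<forall>y\<in>W. \<forall>z\<in>W.
      (x,y) \<in> R1 \<and> (z,y) \<in> R2 \<longrightarrow> (x,y) \<in> f R1 R2 \<or> (z,y) \<in> f R1 R2)"

end

theory Submission
  imports Defs
begin

lemma minset_sub: "minset R A \<subseteq> A" by (auto simp: minset_def)

lemma tpo_sub: "tpo W R \<Longrightarrow> R \<subseteq> W \<times> W"
  unfolding tpo_def by (elim conjE)

lemma tpo_refl: "tpo W R \<Longrightarrow> x \<in> W \<Longrightarrow> (x,x) \<in> R"
proof -
  assume "tpo W R" "x \<in> W"
  moreover have "\<forall>x\<in>W. (x,x) \<in> R" using \<open>tpo W R\<close> unfolding tpo_def by (elim conjE)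
  ultimately show ?thesis by simp
qed

lemma tpo_trans: "tpo W R \<Longrightarrow> (x,y) \<in> R \<Longrightarrow> (y,z) \<in> R \<Longrightarrow> (x,z) \<in> R"
proof -
  assume "tpo W R" "(x,y) \<in> R" "(y,z) \<in> R"
  moreover have "\<forall>x y z. (x,y) \<in> R \<longrightarrow> (y,z) \<in> R \<longrightarrow> (x,z) \<in> R"
    using \<open>tpo W R\<close> unfolding tpo_def by (elim conjE)
  ultimately show ?thesis by blast
qed

lemma tpo_total: "tpo W R \<Longrightarrow> x \<in> W \<Longrightarrow> y \<in> W \<Longrightarrow> (x,y) \<in> R \<or> (y,x) \<in> R"
proof -
  assume "tpo W R" "x \<in> W" "y \<in> W"
  moreover have "\<forall>x\<in>W. \<forall>y\<in>W. (x,y) \<in> R \<or> (y,x) \<in> R"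
    using \<open>tpo W R\<close> unfolding tpo_def by (elim conjE)
  ultimately show ?thesis by blast
qed

lemma minset_down:
  assumes "tpo W R" "y \<in> minset R A" "w \<in> A" "(w,y) \<in> R"
  shows "w \<in> minset R A"
proof -
  have "(w,v) \<in> R" if "v \<in> A" for v
  proof -
    have "(y,v) \<in> R" using assms(2) that unfolding minset_def by simp
    then show ?thesis using tpo_trans[OF assms(1) assms(4)] by simp
  qed
  then show ?thesis using assms(3) unfolding minset_def by simp
qed

lemma minset_ne:
  assumes "tpo W Q" "finite A" "A \<subseteq> W" "A \<noteq> {}"
  shows "minset Q A \<noteq> {}"
  using assms(2,4,3)
proof (induction A rule: finite_ne_induct)
  case (singleton x)
  then have "(x,x) \<in> Q" using tpo_refl[OF assms(1)] by simp
  then have "x \<in> minset Q {x}" unfolding minset_def by simp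
  then show ?case by blast
next
  case (insert a F)
  then obtain m where m: "m \<in> minset Q F" by auto
  have aW: "a \<in> W" using insert by simp
  have mF: "m \<in> F" using m unfolding minset_def by simp
  then have mW: "m \<in> W" using insert by auto
  have mle: "(m,v) \<in> Q" if "v \<in> F" for v using m that unfolding minset_def by simp
  show ?case
  proof (cases "(a,m) \<in> Q")
    case True
    have "(a,v) \<in> Q" if "v \<in> insert a F" for v
    proof (cases "v = a")
      case True then show ?thesis using tpo_refl[OF assms(1) aW] by simp
    next
      case False then have "v \<in> F" using that by simp
      then show ?thesis using tpo_trans[OF assms(1) \<open>(a,m) \<in> Q\<close> mle] by simp
    qed
    then have "a \<in> minset Q (insert a F)" unfolding minset_def by simp
    then show ?thesis by blast
  next
    case False
    then have ma: "(m,a) \<in> Q" using tpo_total[OF assms(1) aW mW] by simp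
    have "(m,v) \<in> Q" if "v \<in> insert a F" for v
      using that ma mle by auto
    then have "m \<in> minset Q (insert a F)" using mF unfolding minset_def by simp
    then show ?thesis by blast
  qed
qed

lemma rem_Suc: "tq_rem W R1 R2 a (Suc n) = tq_rem W R1 R2 a n - tq_rank W R1 R2 a (Suc n)"
  by (simp add: tq_rank_def)

lemma rem_sub: "tq_rem W R1 R2 a n \<subseteq> W"
  by (induction n) auto

lemma rem_mono: "i \<le> j \<Longrightarrow> tq_rem W R1 R2 a j \<subseteq> tq_rem W R1 R2 a i"
  by (rule lift_Suc_antimono_le[of "tq_rem W R1 R2 a"]) auto

lemma rank_sub: "tq_rank W R1 R2 a i \<subseteq> tq_rem W R1 R2 a (i-1)"
  by (auto simp: tq_rank_def minset_def)

lemma rank_W: "tq_rank W R1 R2 a i \<subseteq> W"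
  using rank_sub[of W R1 R2 a i] rem_sub[of W R1 R2 a "i-1"] by blast

lemma rank_disj: "1 \<le> i \<Longrightarrow> x \<in> tq_rank W R1 R2 a i \<Longrightarrow> x \<notin> tq_rem W R1 R2 a i"
proof -
  assume "1 \<le> i" "x \<in> tq_rank W R1 R2 a i"
  moreover obtain n where "i = Suc n" using \<open>1 \<le> i\<close> by (cases i) auto
  ultimately show ?thesis using rem_Suc[of W R1 R2 a n] by blast
qed

lemma rank_ge:
  assumes "1 \<le> i" "x \<in> tq_rank W R1 R2 a i" "x \<in> tq_rem W R1 R2 a (j-1)"
  shows "j \<le> i"
proof (rule ccontr)
  assume "\<not> j \<le> i"
  then have "tq_rem W R1 R2 a (j-1) \<subseteq> tq_rem W R1 R2 a i" by (intro rem_mono) auto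
  then show False using assms rank_disj[OF assms(1,2)] by blast
qed

lemma rank_uniq:
  assumes "1 \<le> i" "1 \<le> j" "x \<in> tq_rank W R1 R2 a i" "x \<in> tq_rank W R1 R2 a j"
  shows "i = j"
proof -
  have "j \<le> i" using rank_ge[OF assms(1,3)] rank_sub[of W R1 R2 a j] assms(4) by blast
  moreover have "i \<le> j" using rank_ge[OF assms(2,4)] rank_sub[of W R1 R2 a i] assms(3) by blast
  ultimately show ?thesis by simp
qed

lemma order_iff:
  assumes "1 \<le> i" "i \<le> m" "1 \<le> j" "j \<le> m"
    "x \<in> tq_rank W R1 R2 a i" "y \<in> tq_rank W R1 R2 a j"
  shows "(x,y) \<in> tq_order W R1 R2 a m \<longleftrightarrow> i \<le> j"
proof
  assume "(x,y) \<in> tq_order W R1 R2 a m"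
  then obtain i' j' where h: "1 \<le> i'" "i' \<le> j'" "j' \<le> m"
    "x \<in> tq_rank W R1 R2 a i'" "y \<in> tq_rank W R1 R2 a j'"
    unfolding tq_order_def by blast
  have "i' = i" using rank_uniq h assms by (metis order_trans)
  moreover have "j' = j" using rank_uniq h assms by (metis order_trans)
  ultimately show "i \<le> j" using h by simp
next
  assume "i \<le> j" then show "(x,y) \<in> tq_order W R1 R2 a m"
    using assms unfolding tq_order_def by blast
qed

lemma covers_ex:
  assumes "covers_at W R1 R2 a m" "x \<in> W"
  shows "\<exists>i. 1 \<le> i \<and> i \<le> m \<and> x \<in> tq_rank W R1 R2 a i"
proof -
  have "x \<in> (\<Union>i\<in>{1..m}. tq_rank W R1 R2 a i)" using assms unfolding covers_at_def by simp
  then show ?thesis by auto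
qed

lemma wpu_aux:
  assumes cov: "covers_at W R1 R2 a m" and tQ: "tpo W Q"
    and j: "1 \<le> j" "j \<le> m" and yr: "y \<in> tq_rank W R1 R2 a j"
    and k: "k \<in> a j" and Qk: "sel R1 R2 k = Q"
    and ym: "y \<in> minset Q (tq_rem W R1 R2 a (j-1))"
    and x: "x \<in> W" "(x,y) \<in> Q"
  shows "(x,y) \<in> tq_order W R1 R2 a m"
proof -
  obtain i where i: "1 \<le> i" "i \<le> m" "x \<in> tq_rank W R1 R2 a i" using covers_ex[OF cov x(1)] by blast
  show ?thesis
  proof (cases "i \<le> j")
    case True then show ?thesis using order_iff[OF i(1,2) j(1,2) i(3) yr] by blast
  next
    case False
    then have "tq_rem W R1 R2 a (i-1) \<subseteq> tq_rem W R1 R2 a (j-1)" by (intro rem_mono) auto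
    then have "x \<in> tq_rem W R1 R2 a (j-1)" using i rank_sub[of W R1 R2 a i] by blast
    then have "x \<in> minset Q (tq_rem W R1 R2 a (j-1))" using minset_down[OF tQ ym _ x(2)] by blast
    then have "x \<in> tq_rank W R1 R2 a j" using k Qk unfolding tq_rank_def by blast
    then have "i = j" using rank_uniq[OF i(1) j(1) i(3)] by blast
    then show ?thesis using False by simp
  qed
qed

lemma spu_aux:
  assumes cov: "covers_at W R1 R2 a m"
    and j: "1 \<le> j" "j \<le> m" and yr: "y \<in> tq_rank W R1 R2 a j"
    and ym: "y \<in> minset Q (tq_rem W R1 R2 a (j-1))"
    and x: "x \<in> W" "strict Q x y"
  shows "strict (tq_order W R1 R2 a m) x y"
proof -
  obtain i where i: "1 \<le> i" "i \<le> m" "x \<in> tq_rank W R1 R2 a i" using covers_ex[OF cov x(1)] by blast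
  have "i < j"
  proof (rule ccontr)
    assume "\<not> i < j"
    then have "tq_rem W R1 R2 a (i-1) \<subseteq> tq_rem W R1 R2 a (j-1)" by (intro rem_mono) auto
    then have "x \<in> tq_rem W R1 R2 a (j-1)" using i rank_sub[of W R1 R2 a i] by blast
    then have "(y,x) \<in> Q" using ym unfolding minset_def by blast
    then show False using x(2) unfolding strict_def by blast
  qed
  then show ?thesis unfolding strict_def using order_iff[OF i(1,2) j(1,2) i(3) yr] order_iff[OF j(1,2) i(1,2) yr i(3)]
    by simp
qed

lemma forward_pair:
  assumes t1: "tpo W R1" and t2: "tpo W R2" and fin: "finite W" and Wne: "W \<noteq> {}"
    and a: "\<forall>i\<ge>1. a i \<noteq> {} \<and> a i \<subseteq> {1,2}" "a 1 = {1,2}"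
    and cov: "covers_at W R1 R2 a m"
  shows "minset (tq_order W R1 R2 a m) W = minset R1 W \<union> minset R2 W"
    and "\<forall>x\<in>W. \<forall>y\<in>W. \<forall>z\<in>W. strict R1 x y \<and> strict R2 z y \<longrightarrow>
          strict (tq_order W R1 R2 a m) x y \<or> strict (tq_order W R1 R2 a m) z y"
    and "\<forall>x\<in>W. \<forall>y\<in>W. \<forall>z\<in>W. (x,y) \<in> R1 \<and> (z,y) \<in> R2 \<longrightarrow>
          (x,y) \<in> tq_order W R1 R2 a m \<or> (z,y) \<in> tq_order W R1 R2 a m"
proof -
  let ?T = "tq_order W R1 R2 a m"
  have r1: "tq_rank W R1 R2 a 1 = minset R1 W \<union> minset R2 W"
    using a(2) by (simp add: tq_rank_def sel_def)
  have sel1: "sel R1 R2 1 = R1" and sel2: "sel R1 R2 2 = R2" by (simp_all add: sel_def)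
  have ex: "\<exists>k\<in>a j. y \<in> minset (sel R1 R2 k) (tq_rem W R1 R2 a (j-1))"
    if "y \<in> tq_rank W R1 R2 a j" for y j using that unfolding tq_rank_def by blast
  show "minset ?T W = minset R1 W \<union> minset R2 W"
  proof
    show "minset ?T W \<subseteq> minset R1 W \<union> minset R2 W"
    proof
      fix x assume x: "x \<in> minset ?T W"
      obtain y where y: "y \<in> minset R1 W" using minset_ne[OF t1 fin _ Wne] by blast
      have "y \<in> W" using y by (simp add: minset_def)
      then have "(x,y) \<in> ?T" using x unfolding minset_def by blast
      then obtain i j where h: "1 \<le> i" "i \<le> j" "j \<le> m"
        "x \<in> tq_rank W R1 R2 a i" "y \<in> tq_rank W R1 R2 a j"
        unfolding tq_order_def by blast
      have "j = 1" using rank_uniq[of j 1 y] h y r1 by auto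
      then have "i = 1" using h by simp
      then show "x \<in> minset R1 W \<union> minset R2 W" using h r1 by simp
    qed
  next
    show "minset R1 W \<union> minset R2 W \<subseteq> minset ?T W"
    proof
      fix x assume x: "x \<in> minset R1 W \<union> minset R2 W"
      have "x \<in> W" using x by (auto simp: minset_def)
      moreover have "(x,y) \<in> ?T" if yW: "y \<in> W" for y
      proof -
        obtain j where "1 \<le> j" "j \<le> m" "y \<in> tq_rank W R1 R2 a j" using covers_ex[OF cov yW] by blast
        then show ?thesis using x r1 unfolding tq_order_def by fastforce
      qed
      ultimately show "x \<in> minset ?T W" unfolding minset_def by blast
    qed
  qed
  show "\<forall>x\<in>W. \<forall>y\<in>W. \<forall>z\<in>W. strict R1 x y \<and> strict R2 z y \<longrightarrow> strict ?T x y \<or> strict ?T z y"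
  proof (intro ballI impI)
    fix x y z assume W: "x \<in> W" "y \<in> W" "z \<in> W" and s: "strict R1 x y \<and> strict R2 z y"
    obtain j where j: "1 \<le> j" "j \<le> m" "y \<in> tq_rank W R1 R2 a j" using covers_ex[OF cov W(2)] by blast
    obtain k where k: "k \<in> a j" "y \<in> minset (sel R1 R2 k) (tq_rem W R1 R2 a (j-1))" using ex[OF j(3)] by blast
    have "k = 1 \<or> k = 2" using a(1) j k by blast
    then show "strict ?T x y \<or> strict ?T z y"
    proof
      assume "k = 1" then show ?thesis using spu_aux[OF cov j, of R1 x] k W s sel1 by auto
    next
      assume "k = 2" then show ?thesis using spu_aux[OF cov j, of R2 z] k W s sel2 by auto
    qed
  qed
  show "\<forall>x\<in>W. \<forall>y\<in>W. \<forall>z\<in>W. (x,y) \<in> R1 \<and> (z,y) \<in> R2 \<longrightarrow> (x,y) \<in> ?T \<or> (z,y) \<in> ?T"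
  proof (intro ballI impI)
    fix x y z assume W: "x \<in> W" "y \<in> W" "z \<in> W" and s: "(x,y) \<in> R1 \<and> (z,y) \<in> R2"
    obtain j where j: "1 \<le> j" "j \<le> m" "y \<in> tq_rank W R1 R2 a j" using covers_ex[OF cov W(2)] by blast
    obtain k where k: "k \<in> a j" "y \<in> minset (sel R1 R2 k) (tq_rem W R1 R2 a (j-1))" using ex[OF j(3)] by blast
    have "k = 1 \<or> k = 2" using a(1) j k by blast
    then show "(x,y) \<in> ?T \<or> (z,y) \<in> ?T"
    proof
      assume "k = 1" then show ?thesis using wpu_aux[OF cov t1 j(1,2,3) k(1) _ _ W(1)] k s sel1 by auto
    next
      assume "k = 2" then show ?thesis using wpu_aux[OF cov t2 j(1,2,3) k(1) _ _ W(3)] k s sel2 by auto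
    qed
  qed
qed

lemma key:
  assumes tP: "tpo W P" and tQ: "tpo W Q" and tR: "tpo W R" and fin: "finite W" and AW: "A \<subseteq> W"
    and var: "\<And>x y. x \<in> W \<Longrightarrow> y \<in> W \<Longrightarrow> (x \<in> S \<longleftrightarrow> y \<in> S) \<Longrightarrow> ((x,y) \<in> P \<longleftrightarrow> (x,y) \<in> Q)"
    and wpu: "\<And>x y z. x \<in> W \<Longrightarrow> y \<in> W \<Longrightarrow> z \<in> W \<Longrightarrow> (x,y) \<in> P \<Longrightarrow> (z,y) \<in> Q \<Longrightarrow> (x,y) \<in> R \<or> (z,y) \<in> R"
    and yR: "y \<in> minset R A" and yP: "y \<in> minset P A" and nsub: "\<not> minset P A \<subseteq> minset R A"
  shows "y \<in> minset Q A \<and> minset Q A \<subseteq> minset R A"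
proof -
  obtain x where xP: "x \<in> minset P A" and xR: "x \<notin> minset R A" using nsub by blast
  have xA: "x \<in> A" and yA: "y \<in> A" using xP yP by (simp_all add: minset_def)
  have xW: "x \<in> W" and yW: "y \<in> W" using xA yA AW by blast+
  have xy: "(x,y) \<in> P" using xP yA unfolding minset_def by blast
  have noxy: "(x,y) \<notin> R" using minset_down[OF tR yR xA] xR by blast
  have yQ: "y \<in> minset Q A"
  proof (rule ccontr)
    assume ynQ: "y \<notin> minset Q A"
    show False
    proof (cases "x \<in> S \<longleftrightarrow> y \<in> S")
      case True
      then have "(x,y) \<in> Q" using var[OF xW yW] xy by blast
      then show False using wpu[OF xW yW xW xy] noxy by blast
    next
      case False
      have xnQ: "x \<notin> minset Q A"
      proof
        assume "x \<in> minset Q A"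
        then have "(x,y) \<in> Q" using yA unfolding minset_def by blast
        then show False using wpu[OF xW yW xW xy] noxy by blast
      qed
      have "A \<noteq> {}" using xA by blast
      then obtain z where zQ: "z \<in> minset Q A" using minset_ne[OF tQ finite_subset[OF AW fin] AW] by blast
      have zA: "z \<in> A" using zQ by (simp add: minset_def)
      have zW: "z \<in> W" using zA AW by blast
      have yz: "(y,z) \<notin> Q" using minset_down[OF tQ zQ yA] ynQ by blast
      have xz: "(x,z) \<notin> Q" using minset_down[OF tQ zQ xA] xnQ by blast
      have "(y,z) \<in> P" using yP zA unfolding minset_def by blast
      moreover have "(x,z) \<in> P" using xP zA unfolding minset_def by blast
      ultimately show False using var[OF yW zW] var[OF xW zW] yz xz False by blast
    qed
  qed
  moreover have "minset Q A \<subseteq> minset R A"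
  proof
    fix w assume wQ: "w \<in> minset Q A"
    have wA: "w \<in> A" using wQ by (simp add: minset_def)
    have "(w,y) \<in> Q" using wQ yA unfolding minset_def by blast
    then have "(w,y) \<in> R" using wpu[OF xW yW _ xy] wA AW noxy by blast
    then show "w \<in> minset R A" using minset_down[OF tR yR wA] by blast
  qed
  ultimately show ?thesis by blast
qed

lemma spu_min:
  assumes tP: "tpo W P" and tQ: "tpo W Q" and AW: "A \<subseteq> W"
    and spu: "\<forall>x\<in>W. \<forall>y\<in>W. \<forall>z\<in>W. strict P x y \<and> strict Q z y \<longrightarrow> strict R x y \<or> strict R z y"
    and yR: "y \<in> minset R A"
  shows "y \<in> minset P A \<or> y \<in> minset Q A"
proof (rule ccontr)
  assume n: "\<not> (y \<in> minset P A \<or> y \<in> minset Q A)"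
  have yA: "y \<in> A" using yR by (simp add: minset_def)
  obtain x where x: "x \<in> A" "(y,x) \<notin> P" using n yA unfolding minset_def by blast
  obtain z where z: "z \<in> A" "(y,z) \<notin> Q" using n yA unfolding minset_def by blast
  have xW: "x \<in> W" and yW: "y \<in> W" and zW: "z \<in> W" using x z yA AW by blast+
  have "(x,y) \<in> P" using tpo_total[OF tP xW yW] x(2) by blast
  moreover have "(z,y) \<in> Q" using tpo_total[OF tQ zW yW] z(2) by blast
  ultimately have "strict P x y" "strict Q z y" using x(2) z(2) unfolding strict_def by blast+
  then have "strict R x y \<or> strict R z y" using spu[rule_format, OF xW yW zW] by blast
  moreover have "(y,x) \<in> R" "(y,z) \<in> R" using yR x z unfolding minset_def by blast+
  ultimately show False unfolding strict_def by blast
qed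

lemma union_lemma:
  assumes t1: "tpo W R1" and t2: "tpo W R2" and tR: "tpo W R" and fin: "finite W" and AW: "A \<subseteq> W"
    and var: "\<And>x y. x \<in> W \<Longrightarrow> y \<in> W \<Longrightarrow> (x \<in> S \<longleftrightarrow> y \<in> S) \<Longrightarrow> ((x,y) \<in> R1 \<longleftrightarrow> (x,y) \<in> R2)"
    and spu: "\<forall>x\<in>W. \<forall>y\<in>W. \<forall>z\<in>W. strict R1 x y \<and> strict R2 z y \<longrightarrow> strict R x y \<or> strict R z y"
    and wpu: "\<forall>x\<in>W. \<forall>y\<in>W. \<forall>z\<in>W. (x,y) \<in> R1 \<and> (z,y) \<in> R2 \<longrightarrow> (x,y) \<in> R \<or> (z,y) \<in> R"
  shows "(\<Union>j\<in>{j. j \<in> {1,2} \<and> minset (sel R1 R2 j) A \<subseteq> minset R A}. minset (sel R1 R2 j) A) = minset R A"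
proof
  show "(\<Union>j\<in>{j. j \<in> {1,2} \<and> minset (sel R1 R2 j) A \<subseteq> minset R A}. minset (sel R1 R2 j) A) \<subseteq> minset R A"
    by blast
next
  have s1: "sel R1 R2 1 = R1" and s2: "sel R1 R2 2 = R2" by (simp_all add: sel_def)
  have wpu1: "(x,y) \<in> R \<or> (z,y) \<in> R"
    if "x \<in> W" "y \<in> W" "z \<in> W" "(x,y) \<in> R1" "(z,y) \<in> R2" for x y z
    using wpu[rule_format, of x y z] that by blast
  have wpu2: "(x,y) \<in> R \<or> (z,y) \<in> R"
    if "x \<in> W" "y \<in> W" "z \<in> W" "(x,y) \<in> R2" "(z,y) \<in> R1" for x y z
    using wpu[rule_format, of z y x] that by blast
  show "minset R A \<subseteq> (\<Union>j\<in>{j. j \<in> {1,2} \<and> minset (sel R1 R2 j) A \<subseteq> minset R A}. minset (sel R1 R2 j) A)"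
  proof
    fix y assume yR: "y \<in> minset R A"
    have c: "(y \<in> minset R1 A \<and> minset R1 A \<subseteq> minset R A) \<or> (y \<in> minset R2 A \<and> minset R2 A \<subseteq> minset R A)"
    proof (cases "y \<in> minset R1 A")
      case True
      show ?thesis
      proof (cases "minset R1 A \<subseteq> minset R A")
        case False
        have "y \<in> minset R2 A \<and> minset R2 A \<subseteq> minset R A"
          using key[where S=S, OF t1 t2 tR fin AW var wpu1 yR True False] .
        then show ?thesis by blast
      qed (use True in blast)
    next
      case False
      then have y2: "y \<in> minset R2 A" using spu_min[OF t1 t2 AW spu yR] by blast
      show ?thesis
      proof (cases "minset R2 A \<subseteq> minset R A")
        case nsub: False
        have var': "\<And>x y. x \<in> W \<Longrightarrow> y \<in> W \<Longrightarrow> (x \<in> S \<longleftrightarrow> y \<in> S) \<Longrightarrow> ((x,y) \<in> R2 \<longleftrightarrow> (x,y) \<in> R1)"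
          using var by blast
        have "y \<in> minset R1 A \<and> minset R1 A \<subseteq> minset R A"
          using key[where S=S, OF t2 t1 tR fin AW var' wpu2 yR y2 nsub] .
        then show ?thesis by blast
      qed (use y2 in blast)
    qed
    then show "y \<in> (\<Union>j\<in>{j. j \<in> {1,2} \<and> minset (sel R1 R2 j) A \<subseteq> minset R A}. minset (sel R1 R2 j) A)"
    proof
      assume "y \<in> minset R1 A \<and> minset R1 A \<subseteq> minset R A"
      then show ?thesis using s1 by (intro UN_I[of 1]) auto
    next
      assume "y \<in> minset R2 A \<and> minset R2 A \<subseteq> minset R A"
      then show ?thesis using s2 by (intro UN_I[of 2]) auto
    qed
  qed
qed

primrec rr :: "'a rel \<Rightarrow> 'a set \<Rightarrow> nat \<Rightarrow> 'a set" where
  "rr R W 0 = W"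
| "rr R W (Suc n) = rr R W n - minset R (rr R W n)"

lemma rr_sub: "rr R W n \<subseteq> W" by (induction n) auto

lemma rr_mono: "i \<le> j \<Longrightarrow> rr R W j \<subseteq> rr R W i"
  by (rule lift_Suc_antimono_le[of "rr R W"]) auto

lemma rr_cover: "rr R W k = W - (\<Union>i\<in>{1..k}. minset R (rr R W (i-1)))"
proof (induction k)
  case 0 then show ?case by simp
next
  case (Suc k)
  have "{1..Suc k} = insert (Suc k) {1..k}" by auto
  then have "(\<Union>i\<in>{1..Suc k}. minset R (rr R W (i-1))) = minset R (rr R W k) \<union> (\<Union>i\<in>{1..k}. minset R (rr R W (i-1)))"
    by simp
  then show ?case using Suc by auto
qed

lemma rr_empty_ex:
  assumes "tpo W R" "finite W"
  shows "\<exists>n. rr R W n = {}"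
proof -
  have "rr R W n = {} \<or> card (rr R W n) + n \<le> card W" for n
  proof (induction n)
    case 0 then show ?case by simp
  next
    case (Suc n)
    show ?case
    proof (cases "rr R W n = {}")
      case True then show ?thesis by simp
    next
      case False
      have fn: "finite (rr R W n)" by (rule finite_subset[OF rr_sub assms(2)])
      have ne: "minset R (rr R W n) \<noteq> {}" using minset_ne[OF assms(1) fn rr_sub False] .
      have sb: "minset R (rr R W n) \<subseteq> rr R W n" by (rule minset_sub)
      have "rr R W (Suc n) \<subset> rr R W n" using ne sb by auto
      then have "card (rr R W (Suc n)) < card (rr R W n)" using fn by (rule psubset_card_mono[rotated])
      then show ?thesis using Suc False by simp
    qed
  qed
  then have "rr R W (Suc (card W)) = {} \<or> card (rr R W (Suc (card W))) + Suc (card W) \<le> card W" .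
  then have "rr R W (Suc (card W)) = {}" by linarith
  then show ?thesis by blast
qed

lemma backward_pair:
  assumes t1: "tpo W R1" and t2: "tpo W R2" and tR: "tpo W R" and fin: "finite W" and Wne: "W \<noteq> {}"
    and var: "variants W S R1 R2"
    and bas: "minset R W = minset R1 W \<union> minset R2 W"
    and spu: "\<forall>x\<in>W. \<forall>y\<in>W. \<forall>z\<in>W. strict R1 x y \<and> strict R2 z y \<longrightarrow> strict R x y \<or> strict R z y"
    and wpu: "\<forall>x\<in>W. \<forall>y\<in>W. \<forall>z\<in>W. (x,y) \<in> R1 \<and> (z,y) \<in> R2 \<longrightarrow> (x,y) \<in> R \<or> (z,y) \<in> R"
  shows "\<exists>a :: nat \<Rightarrow> nat set.
      (\<forall>i\<ge>1. a i \<noteq> {} \<and> a i \<subseteq> {1,2}) \<and> a 1 = {1,2} \<and>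
      (\<exists>m. covers_at W R1 R2 a m \<and> (\<forall>m'<m. \<not> covers_at W R1 R2 a m')
           \<and> R = tq_order W R1 R2 a m)"
proof -
  have var': "\<And>x y. x \<in> W \<Longrightarrow> y \<in> W \<Longrightarrow> (x \<in> S \<longleftrightarrow> y \<in> S) \<Longrightarrow> ((x,y) \<in> R1 \<longleftrightarrow> (x,y) \<in> R2)"
  proof -
    fix x y assume xy: "x \<in> W" "y \<in> W" "(x \<in> S \<longleftrightarrow> y \<in> S)"
    then have "(x,y) \<in> (S \<times> S) \<union> ((W - S) \<times> (W - S))" by auto
    then show "((x,y) \<in> R1 \<longleftrightarrow> (x,y) \<in> R2)" using var unfolding variants_def by blast
  qed
  define a where "a = (\<lambda>i. {j. j \<in> {1,2} \<and> minset (sel R1 R2 j) (rr R W (i-1)) \<subseteq> minset R (rr R W (i-1))})"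
  have un: "\<And>A. A \<subseteq> W \<Longrightarrow> (\<Union>j\<in>{j. j \<in> {1,2} \<and> minset (sel R1 R2 j) A \<subseteq> minset R A}. minset (sel R1 R2 j) A) = minset R A"
    using union_lemma[where S=S, OF t1 t2 tR fin _ var' spu wpu] by blast
  have rem_eq: "tq_rem W R1 R2 a n = rr R W n" for n
  proof (induction n)
    case 0 then show ?case by simp
  next
    case (Suc n)
    then show ?case using un[OF rr_sub[of R W n]] by (simp add: a_def)
  qed
  have rank_eq: "tq_rank W R1 R2 a i = minset R (rr R W (i-1))" for i
    unfolding tq_rank_def rem_eq using un[OF rr_sub[of R W "i-1"]] by (simp add: a_def)
  have a1: "a 1 = {1,2}" using bas by (auto simp: a_def sel_def)
  have a2: "\<forall>i\<ge>1. a i \<noteq> {} \<and> a i \<subseteq> {1,2}"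
  proof (intro allI impI conjI)
    fix i :: nat assume "1 \<le> i"
    show "a i \<subseteq> {1,2}" by (auto simp: a_def)
    show "a i \<noteq> {}"
    proof (cases "rr R W (i-1) = {}")
      case True then show ?thesis by (auto simp: a_def minset_def)
    next
      case False
      have fn: "finite (rr R W (i-1))" by (rule finite_subset[OF rr_sub fin])
      have "minset R (rr R W (i-1)) \<noteq> {}" using minset_ne[OF tR fn rr_sub False] .
      then show ?thesis using un[OF rr_sub[of R W "i-1"]] unfolding a_def by auto
    qed
  qed
  have cov_iff: "covers_at W R1 R2 a k \<longleftrightarrow> rr R W k = {}" for k
  proof -
    have sub: "(\<Union>i\<in>{1..k}. minset R (rr R W (i-1))) \<subseteq> W" using rr_sub[of R W] by (auto simp: minset_def)
    show ?thesis unfolding covers_at_def rank_eq rr_cover[of R W k] using sub by blast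
  qed
  define m where "m = (LEAST n. rr R W n = {})"
  have mE: "rr R W m = {}" unfolding m_def using rr_empty_ex[OF tR fin] by (rule LeastI_ex)
  have mmin: "\<forall>m'<m. \<not> covers_at W R1 R2 a m'"
  proof (intro allI impI)
    fix m' assume "m' < m"
    then have "rr R W m' \<noteq> {}" unfolding m_def by (rule not_less_Least)
    then show "\<not> covers_at W R1 R2 a m'" using cov_iff by blast
  qed
  have cov: "covers_at W R1 R2 a m" using mE cov_iff by blast
  have "R = tq_order W R1 R2 a m"
  proof (intro set_eqI iffI)
    fix p assume pR: "p \<in> R"
    obtain x y where p: "p = (x,y)" by (cases p)
    have xW: "x \<in> W" and yW: "y \<in> W" using pR p tpo_sub[OF tR] by blast+
    obtain i where i: "1 \<le> i" "i \<le> m" "x \<in> tq_rank W R1 R2 a i" using covers_ex[OF cov xW] by blast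
    obtain j where j: "1 \<le> j" "j \<le> m" "y \<in> tq_rank W R1 R2 a j" using covers_ex[OF cov yW] by blast
    have "i \<le> j"
    proof (rule ccontr)
      assume "\<not> i \<le> j"
      then have "rr R W (i-1) \<subseteq> rr R W j" by (intro rr_mono) auto
      moreover have "x \<in> rr R W (i-1)" using i(3) rank_eq[of i] by (simp add: minset_def)
      ultimately have xj: "x \<in> rr R W j" by blast
      have "rr R W j \<subseteq> rr R W (j-1)" by (intro rr_mono) auto
      then have "x \<in> rr R W (j-1)" using xj by blast
      moreover have "y \<in> minset R (rr R W (j-1))" using j(3) rank_eq[of j] by blast
      ultimately have "x \<in> minset R (rr R W (j-1))" using minset_down[OF tR _ _ pR[unfolded p]] by blast
      moreover have "rr R W j = rr R W (Suc (j-1))" using j(1) by simp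
      ultimately show False using xj by simp
    qed
    then show "p \<in> tq_order W R1 R2 a m" unfolding p tq_order_def using i j by blast
  next
    fix p assume "p \<in> tq_order W R1 R2 a m"
    then obtain x y i j where p: "p = (x,y)" and h: "1 \<le> i" "i \<le> j" "j \<le> m"
      "x \<in> tq_rank W R1 R2 a i" "y \<in> tq_rank W R1 R2 a j" unfolding tq_order_def by blast
    have "rr R W (j-1) \<subseteq> rr R W (i-1)" using h by (intro rr_mono) auto
    moreover have "y \<in> rr R W (j-1)" using h(5) rank_eq[of j] by (simp add: minset_def)
    ultimately have yi: "y \<in> rr R W (i-1)" by blast
    have "x \<in> minset R (rr R W (i-1))" using h(4) rank_eq[of i] by simp
    then show "p \<in> R" using yi p unfolding minset_def by blast
  qed
  then have "covers_at W R1 R2 a m \<and> (\<forall>m'<m. \<not> covers_at W R1 R2 a m') \<and> R = tq_order W R1 R2 a m"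
    using cov mmin by simp
  then show ?thesis using a1 a2 by (intro exI[of _ a]) blast
qed

theorem proposition5:
  fixes W :: "'a set" and D :: "('a rel \<times> 'a rel) set" and f :: "'a rel \<Rightarrow> 'a rel \<Rightarrow> 'a rel"
  assumes "finite W" and "W \<noteq> {}"
    and "combinator W D f"
    and "D \<subseteq> Vpairs W"
  shows "teamqueue W D f \<longleftrightarrow> basic W D f \<and> SPU_plus W D f \<and> WPU_plus W D f"
proof
  assume tq: "teamqueue W D f"
  have "minset (f R1 R2) W = minset R1 W \<union> minset R2 W \<and>
    (\<forall>x\<in>W. \<forall>y\<in>W. \<forall>z\<in>W. strict R1 x y \<and> strict R2 z y \<longrightarrow> strict (f R1 R2) x y \<or> strict (f R1 R2) z y) \<and>
    (\<forall>x\<in>W. \<forall>y\<in>W. \<forall>z\<in>W. (x,y) \<in> R1 \<and> (z,y) \<in> R2 \<longrightarrow> (x,y) \<in> f R1 R2 \<or> (z,y) \<in> f R1 R2)"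
    if p: "(R1,R2) \<in> D" for R1 R2
  proof -
    have t: "tpo W R1" "tpo W R2" using p assms(4) unfolding Vpairs_def by auto
    have "\<exists>a :: nat \<Rightarrow> nat set.
      (\<forall>i\<ge>1. a i \<noteq> {} \<and> a i \<subseteq> {1,2}) \<and> a 1 = {1,2} \<and>
      (\<exists>m. covers_at W R1 R2 a m \<and> (\<forall>m'<m. \<not> covers_at W R1 R2 a m')
           \<and> f R1 R2 = tq_order W R1 R2 a m)"
      using bspec[OF tq[unfolded teamqueue_def] p] by (simp only: prod.case)
    then obtain a where a: "\<forall>i\<ge>1. a i \<noteq> {} \<and> a i \<subseteq> {1,2}" "a 1 = {1,2}"
      and "\<exists>m. covers_at W R1 R2 a m \<and> (\<forall>m'<m. \<not> covers_at W R1 R2 a m')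
           \<and> f R1 R2 = tq_order W R1 R2 a m" by blast
    then obtain m where cov: "covers_at W R1 R2 a m" and fe: "f R1 R2 = tq_order W R1 R2 a m" by blast
    show ?thesis unfolding fe using forward_pair[OF t assms(1,2) a cov] by blast
  qed
  note pr = this
  have "basic W D f" unfolding basic_def
  proof
    fix q assume qD: "q \<in> D"
    obtain R1 R2 where qq: "q = (R1,R2)" by (cases q)
    have "minset (f R1 R2) W = minset R1 W \<union> minset R2 W" using pr[OF qD[unfolded qq]] by blast
    then show "case q of (R1, R2) \<Rightarrow> minset (f R1 R2) W = minset R1 W \<union> minset R2 W"
      unfolding qq by simp
  qed
  moreover have "SPU_plus W D f" unfolding SPU_plus_def
  proof
    fix q assume qD: "q \<in> D"
    obtain R1 R2 where qq: "q = (R1,R2)" by (cases q)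
    have "\<forall>x\<in>W. \<forall>y\<in>W. \<forall>z\<in>W. strict R1 x y \<and> strict R2 z y \<longrightarrow> strict (f R1 R2) x y \<or> strict (f R1 R2) z y"
      using pr[OF qD[unfolded qq]] by blast
    then show "case q of (R1, R2) \<Rightarrow> \<forall>x\<in>W. \<forall>y\<in>W. \<forall>z\<in>W. strict R1 x y \<and> strict R2 z y \<longrightarrow> strict (f R1 R2) x y \<or> strict (f R1 R2) z y"
      unfolding qq by simp
  qed
  moreover have "WPU_plus W D f" unfolding WPU_plus_def
  proof
    fix q assume qD: "q \<in> D"
    obtain R1 R2 where qq: "q = (R1,R2)" by (cases q)
    have "\<forall>x\<in>W. \<forall>y\<in>W. \<forall>z\<in>W. (x,y) \<in> R1 \<and> (z,y) \<in> R2 \<longrightarrow> (x,y) \<in> f R1 R2 \<or> (z,y) \<in> f R1 R2"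
      using pr[OF qD[unfolded qq]] by blast
    then show "case q of (R1, R2) \<Rightarrow> \<forall>x\<in>W. \<forall>y\<in>W. \<forall>z\<in>W. (x,y) \<in> R1 \<and> (z,y) \<in> R2 \<longrightarrow> (x,y) \<in> f R1 R2 \<or> (z,y) \<in> f R1 R2"
      unfolding qq by simp
  qed
  ultimately show "basic W D f \<and> SPU_plus W D f \<and> WPU_plus W D f" by blast
next
  assume h: "basic W D f \<and> SPU_plus W D f \<and> WPU_plus W D f"
  show "teamqueue W D f"
    unfolding teamqueue_def
  proof (intro ballI, clarify)
    fix R1 R2 assume p: "(R1,R2) \<in> D"
    have t: "tpo W R1" "tpo W R2" and "\<exists>S\<subseteq>W. variants W S R1 R2" using p assms(4) unfolding Vpairs_def by auto
    then obtain S where var: "variants W S R1 R2" by blast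
    have tR: "tpo W (f R1 R2)" using p assms(3) unfolding combinator_def by auto
    have bas: "minset (f R1 R2) W = minset R1 W \<union> minset R2 W" using bspec[OF h[THEN conjunct1, unfolded basic_def] p] by (simp only: prod.case)
    have spu: "\<forall>x\<in>W. \<forall>y\<in>W. \<forall>z\<in>W. strict R1 x y \<and> strict R2 z y \<longrightarrow> strict (f R1 R2) x y \<or> strict (f R1 R2) z y"
      using bspec[OF h[THEN conjunct2, THEN conjunct1, unfolded SPU_plus_def] p] by (simp only: prod.case)
    have wpu: "\<forall>x\<in>W. \<forall>y\<in>W. \<forall>z\<in>W. (x,y) \<in> R1 \<and> (z,y) \<in> R2 \<longrightarrow> (x,y) \<in> f R1 R2 \<or> (z,y) \<in> f R1 R2"
      using bspec[OF h[THEN conjunct2, THEN conjunct2, unfolded WPU_plus_def] p] by (simp only: prod.case)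
    show "\<exists>a :: nat \<Rightarrow> nat set.
      (\<forall>i\<ge>1. a i \<noteq> {} \<and> a i \<subseteq> {1,2}) \<and> a 1 = {1,2} \<and>
      (\<exists>m. covers_at W R1 R2 a m \<and> (\<forall>m'<m. \<not> covers_at W R1 R2 a m')
           \<and> f R1 R2 = tq_order W R1 R2 a m)"
      by (rule backward_pair[OF t tR assms(1,2) var bas spu wpu])
  qed
qed

end
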